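(* Let $c\in(0,\sqrt2)$, $d_2>0$, and for $n_2\in\mathbb{N}_0$ let $\tilde n_2=\frac{n_2}{2d_2}$ and $l_{n_2}(\xi_1)=(2\pi)^4(\xi_1^2+\tilde n_2^2)^2-c^2(2\pi\xi_1)^2+1$. Then $$\min_{\xi_1\in\mathbb{R}}l_{n_2}(\xi_1)=\begin{cases}c^2(2\pi\tilde n_2)^2+1-\frac{c^4}{4}&\text{if }0\le n_2\le\frac{d_2c}{\pi\sqrt2},\\(2\pi\tilde n_2)^4+1&\text{otherwise.}\end{cases}$$ Furthermore, if $n_2\ge\frac{d_2c}{\pi}$, then $l_{n_2}(\xi_1)\ge\frac{(2\pi)^4}{2}(\tilde n_2^2+\xi_1^2)^2$ for all $\xi_1\in\mathbb{R}$. In particular, for every $N\in\mathbb{N}$ with $N>\frac{d_2c}{\pi}$, $$\sum_{n_2=N+1}^{\infty}\left\|\frac{1}{l_{n_2}}\right\|_{L^2(\mathbb{R})}^2\le\frac{5(2d_2)^7}{48(2\pi)^7N^6}.$$ *)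

theory Defs
  imports "HOL-Analysis.Analysis"
begin

definition ntilde :: "real \<Rightarrow> nat \<Rightarrow> real" where
  "ntilde d2 n2 = real n2 / (2 * d2)"

definition lfun :: "real \<Rightarrow> real \<Rightarrow> nat \<Rightarrow> real \<Rightarrow> real" where
  "lfun c d2 n2 \<xi> = (2*pi)^4 * (\<xi>^2 + (ntilde d2 n2)^2)^2 - c^2 * (2*pi*\<xi>)^2 + 1"

end

theory Submission imports Defs "HOL-Probability.Sinc_Integral" begin

lemma lfun_eq: "lfun c d2 n \<xi> = ((2*pi*\<xi>)^2 + (2*pi*ntilde d2 n)^2)^2 - c^2 * (2*pi*\<xi>)^2 + 1"
  by (simp add: lfun_def power_mult_distrib algebra_simps power2_eq_square power4_eq_xxxx)

lemma alg1:
  fixes s V c :: real assumes "s \<ge> 0" "V \<le> c^2/2"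
  shows "c^2 * V + 1 - c^4/4 \<le> (s + V)^2 - c^2 * s + 1"
proof -
  have "(s + V)^2 - c^2 * s + 1 - (c^2 * V + 1 - c^4/4) = (s + V - c^2/2)^2"
    by (simp add: power2_eq_square power4_eq_xxxx algebra_simps)
  thus ?thesis by (metis diff_ge_0_iff_ge zero_le_power2)
qed

lemma alg2:
  fixes s V c :: real assumes "s \<ge> 0" "V \<ge> c^2/2"
  shows "V^2 + 1 \<le> (s + V)^2 - c^2 * s + 1"
proof -
  have "(s + V)^2 - c^2 * s + 1 - (V^2 + 1) = s * (s + 2*V - c^2)"
    by (simp add: power2_eq_square algebra_simps)
  moreover have "s * (s + 2*V - c^2) \<ge> 0" using assms by simp
  ultimately show ?thesis by linarith
qed

lemma alg3:
  fixes s V c :: real assumes "s \<ge> 0" "V \<ge> c^2"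
  shows "(s + V)^2 / 2 \<le> (s + V)^2 - c^2 * s + 1"
proof -
  have "c^2 * s \<le> V * s" using assms by (simp add: mult_right_mono)
  moreover have "(s + V)^2 / 2 - V * s = (s^2 + V^2) / 2" by (simp add: power2_eq_square algebra_simps)
  moreover have "(s^2 + V^2)/2 \<ge> 0" by simp
  ultimately show ?thesis by linarith
qed

lemma alg4:
  fixes s V c :: real assumes "s \<ge> 0" "V \<ge> c^2"
  shows "3/4 * (s + V)^2 + 1 \<le> (s + V)^2 - c^2 * s + 1"
proof -
  have "c^2 * s \<le> V * s" using assms by (simp add: mult_right_mono)
  moreover have "(s + V)^2 / 4 - V * s = (s - V)^2 / 4" by (simp add: power2_eq_square algebra_simps)
  moreover have "(s - V)^2/4 \<ge> 0" by simp
  ultimately show ?thesis by linarith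
qed

lemma int1: "(\<integral>\<^sup>+x. ennreal (inverse (1 + x^2)) \<partial>lborel) = ennreal pi"
proof -
  have e: "einterval (-\<infinity>) \<infinity> = UNIV" by (auto simp: einterval_def)
  have i: "integrable lborel (\<lambda>x::real. inverse (1 + x^2))"
    using integrable_inverse_1_plus_square by (simp add: set_integrable_def)
  have v: "integral\<^sup>L lborel (\<lambda>x::real. inverse (1 + x^2)) = pi"
    using LBINT_inverse_1_plus_square by (simp add: interval_lebesgue_integral_def set_lebesgue_integral_def)
  show ?thesis
    by (subst nn_integral_eq_integral[OF i]) (auto simp: v add_pos_nonneg)
qed

lemma int2:
  fixes b :: real assumes b: "b > 0"
  shows "(\<integral>\<^sup>+x. ennreal (inverse (b^2 + x^2)) \<partial>lborel) = ennreal (pi / b)"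
proof -
  have "(\<integral>\<^sup>+x. ennreal (inverse (b^2 + x^2)) \<partial>lborel)
      = \<bar>b\<bar> * (\<integral>\<^sup>+x. ennreal (inverse (b^2 + (0 + b*x)^2)) \<partial>lborel)"
    by (rule nn_integral_real_affine) (use b in auto)
  also have "(\<lambda>x. ennreal (inverse (b^2 + (0 + b*x)^2))) = (\<lambda>x. ennreal (inverse (b^2)) * ennreal (inverse (1 + x^2)))"
    using b by (auto simp: ennreal_mult[symmetric] power_mult_distrib field_simps add_pos_nonneg)
  also have "(\<integral>\<^sup>+x. ennreal (inverse (b^2)) * ennreal (inverse (1 + x^2)) \<partial>lborel) = ennreal (inverse (b^2)) * ennreal pi"
    by (subst nn_integral_cmult) (auto simp: int1)
  finally show ?thesis using b
    by (simp add: ennreal_mult[symmetric] power2_eq_square field_simps)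
qed

lemma poly8:
  fixes a x :: real
  shows "a^6 * (4 * ((a/2)^2 + x^2)) \<le> (x^2 + a^2)^4"
proof -
  have "(x^2 + a^2)^4 - a^6 * (4 * ((a/2)^2 + x^2)) = 6*(a^2)^2*(x^2)^2 + 4*a^2*(x^2)^3 + (x^2)^4"
    by (simp add: power2_eq_square power4_eq_xxxx algebra_simps eval_nat_numeral)
  moreover have "6*(a^2)^2*(x^2)^2 + 4*a^2*(x^2)^3 + (x^2)^4 \<ge> 0" by simp
  ultimately show ?thesis by linarith
qed

lemma ptwise:
  fixes c d2 :: real and n :: nat
  assumes c: "c \<le> 2*pi*ntilde d2 n" "0 < c" and a: "ntilde d2 n > 0"
  shows "(1 / lfun c d2 n \<xi>)^2 \<le> 4 / (9 * (2*pi)^8 * (ntilde d2 n)^6) * inverse ((ntilde d2 n / 2)^2 + \<xi>^2)"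
proof -
  define a where "a = ntilde d2 n"
  define s where "s = (2*pi*\<xi>)^2"
  define V where "V = (2*pi*a)^2"
  define Q where "Q = s + V"
  have s0: "s \<ge> 0" by (simp add: s_def)
  have V: "V \<ge> c^2" unfolding V_def a_def using c by (intro power_mono) auto
  have L: "lfun c d2 n \<xi> \<ge> 3/4 * Q^2 + 1"
    using alg4[OF s0 V] by (simp add: lfun_eq Q_def s_def V_def a_def)
  have Qeq: "Q = (2*pi)^2 * (\<xi>^2 + a^2)" by (simp add: Q_def s_def V_def power_mult_distrib algebra_simps)
  have ap: "a > 0" using a by (simp add: a_def)
  have Qp: "Q > 0" unfolding Qeq using ap by (simp add: add_nonneg_pos)
  have Q2: "3/4 * Q^2 > 0" using Qp by simp
  have Lp: "lfun c d2 n \<xi> > 0" using L Q2 by linarith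
  have "1 / lfun c d2 n \<xi> \<le> 1 / (3/4 * Q^2)"
    using L Q2 Lp by (intro divide_left_mono) auto
  hence "(1 / lfun c d2 n \<xi>)^2 \<le> (1 / (3/4 * Q^2))^2"
    using Lp by (intro power_mono) auto
  also have "\<dots> = 16/9 / Q^4" by (simp add: power2_eq_square power4_eq_xxxx field_simps)
  also have "Q^4 = (2*pi)^8 * (\<xi>^2 + a^2)^4" unfolding Qeq by (simp add: power_mult_distrib flip: power_mult)
  also have "16/9 / ((2*pi)^8 * (\<xi>^2 + a^2)^4) \<le> 16/9 / ((2*pi)^8 * (a^6 * (4 * ((a/2)^2 + \<xi>^2))))"
    using ap poly8[of a \<xi>] by (intro divide_left_mono mult_left_mono mult_pos_pos) (auto simp: add_pos_nonneg)
  also have "\<dots> = 4 / (9 * (2*pi)^8 * a^6) * inverse ((a / 2)^2 + \<xi>^2)"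
  proof -
    define B where "B = (a / 2)^2 + \<xi>^2"
    have Bp: "B > 0" using ap by (simp add: B_def add_pos_nonneg)
    have "16/9 / ((2*pi)^8 * (a^6 * (4 * B))) = 4 / (9 * (2*pi)^8 * a^6) * inverse B"
      using Bp ap by (simp add: field_simps)
    thus ?thesis by (simp add: B_def)
  qed
  finally show ?thesis by (simp add: a_def)
qed

lemma int_bound:
  fixes c d2 :: real and n :: nat
  assumes c: "0 < c" and d: "0 < d2" and n: "real n \<ge> d2 * c / pi" "n > 0"
  shows "(\<integral>\<^sup>+\<xi>. ennreal ((1 / lfun c d2 n \<xi>)^2) \<partial>lborel) \<le> ennreal (4 * (2*d2)^7 / (9 * (2*pi)^7 * real n ^ 7))"
proof -
  define a where "a = ntilde d2 n"
  have ap: "a > 0" using n d by (simp add: a_def ntilde_def)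
  have v: "2*pi*a = pi * real n / d2" using d by (simp add: a_def ntilde_def)
  have cv: "c \<le> 2*pi*ntilde d2 n" unfolding a_def[symmetric] v using n d
    by (simp add: field_simps)
  define K where "K = 4 / (9 * (2*pi)^8 * a^6)"
  have "(\<integral>\<^sup>+\<xi>. ennreal ((1 / lfun c d2 n \<xi>)^2) \<partial>lborel)
      \<le> (\<integral>\<^sup>+\<xi>. ennreal K * ennreal (inverse ((a / 2)^2 + \<xi>^2)) \<partial>lborel)"
  proof (intro nn_integral_mono)
    fix \<xi> :: real
    have "(1 / lfun c d2 n \<xi>)^2 \<le> K * inverse ((a / 2)^2 + \<xi>^2)"
      using ptwise[OF cv c] ap by (simp add: K_def a_def)
    moreover have "K \<ge> 0" by (simp add: K_def)
    ultimately show "ennreal ((1 / lfun c d2 n \<xi>)^2) \<le> ennreal K * ennreal (inverse ((a / 2)^2 + \<xi>^2))"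
      by (simp add: ennreal_mult[symmetric] add_pos_nonneg ennreal_leI)
  qed
  also have "\<dots> = ennreal K * ennreal (pi / (a/2))"
    by (subst nn_integral_cmult) (use ap int2[of "a/2"] in auto)
  also have "\<dots> = ennreal (K * (pi / (a/2)))"
    by (rule ennreal_mult[symmetric]) (use ap in \<open>auto simp: K_def\<close>)
  also have "K * (pi / (a/2)) = 4 * (2*d2)^7 / (9 * (2*pi)^7 * real n ^ 7)"
    using d n ap by (simp add: K_def a_def ntilde_def field_simps power_mult_distrib eval_nat_numeral)
  finally show ?thesis .
qed

lemma tele1:
  fixes m :: real assumes "m \<ge> 1"
  shows "1 / (m+1)^7 \<le> (1/m^6 - 1/(m+1)^6) / 6"
proof -
  have "(m+1)^7 - (m+7)*m^6 = 21*m^5+35*m^4+35*m^3+21*m^2+7*m+1"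
    by (simp add: algebra_simps eval_nat_numeral)
  moreover have "21*m^5+35*m^4+35*m^3+21*m^2+7*m+1 \<ge> 0" using assms by simp
  ultimately have h: "(m+7)*m^6 \<le> (m+1)^7" by linarith
  have p: "m > 0" using assms by simp
  define x where "x = m^6"
  define y where "y = (m+1)^6"
  have xp: "x > 0" and yp: "y > 0" using p by (auto simp: x_def y_def)
  have e7: "(m+1)^7 = (m+1)*y" unfolding y_def by (simp add: eval_nat_numeral)
  have h2: "6*x \<le> (m+1)*(y-x)" using h unfolding e7 x_def[symmetric] by (simp add: algebra_simps)
  have "1 / (m+1)^7 = 6*x / (6*x*((m+1)*y))" using xp yp p e7 by simp
  also have "\<dots> \<le> (m+1)*(y-x) / (6*x*((m+1)*y))" using xp yp p h2 by (intro divide_right_mono) auto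
  also have "6*x*((m+1)*y) = (m+1)*(6*x*y)" by (simp add: algebra_simps)
  also have "(m+1)*(y-x) / ((m+1)*(6*x*y)) = (y-x)/(6*x*y)"
    using p by (intro nonzero_mult_divide_mult_cancel_left) auto
  also have "(y-x)/(6*x*y) = (1/x - 1/y) / 6" using xp yp by (simp add: field_simps)
  finally show ?thesis by (simp add: x_def y_def)
qed

lemma part3:
  fixes c d2 :: real and N :: nat
  assumes c: "0 < c" and d: "0 < d2" and hN: "real N > d2 * c / pi"
  shows "(\<Sum>k. \<integral>\<^sup>+ \<xi>. ennreal ((1 / lfun c d2 (k + N + 1) \<xi>)^2) \<partial>lborel)
             \<le> ennreal (5 * (2*d2)^7 / (48 * (2*pi)^7 * real N ^ 6))"
proof -
  have "d2 * c / pi > 0" using c d by simp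
  hence "real N > 0" using hN by linarith
  hence N1: "real N \<ge> 1" by simp
  define B where "B = 4 * (2*d2)^7 / (9 * (2*pi)^7)"
  have B0: "B \<ge> 0" using d by (simp add: B_def)
  have each: "(\<integral>\<^sup>+ \<xi>. ennreal ((1 / lfun c d2 (k + N + 1) \<xi>)^2) \<partial>lborel) \<le> ennreal (B / real (k+N+1)^7)" for k
  proof -
    have "real (k+N+1) \<ge> d2 * c / pi" using hN by simp
    from int_bound[OF c d this] show ?thesis by (simp add: B_def mult.assoc)
  qed
  have "(\<Sum>k. \<integral>\<^sup>+ \<xi>. ennreal ((1 / lfun c d2 (k + N + 1) \<xi>)^2) \<partial>lborel) \<le> (\<Sum>k. ennreal (B / real (k+N+1)^7))"
    by (intro suminf_le each summableI)
  also have "\<dots> \<le> ennreal (B / (6 * real N ^ 6))"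
  proof (rule suminf_le_const[OF summableI])
    fix M
    have ps: "(\<Sum>k<M. B / real (k+N+1)^7) \<le> B/6 * (1/real N^6 - 1/real (M+N)^6)" for M
    proof (induction M)
      case 0 then show ?case by simp
    next
      case (Suc M)
      have m1: "real (M+N) \<ge> 1" using N1 by simp
      have "B / real (M+N+1)^7 \<le> B/6 * (1/real (M+N)^6 - 1/real (M+N+1)^6)"
        using mult_left_mono[OF tele1[OF m1] B0] by (simp add: field_simps)
      with Suc show ?case by (simp add: algebra_simps)
    qed
    have "(\<Sum>k<M. ennreal (B / real (k+N+1)^7)) = ennreal (\<Sum>k<M. B / real (k+N+1)^7)"
      using B0 by (intro sum_ennreal) auto
    also have "\<dots> \<le> ennreal (B / (6 * real N ^ 6))"
    proof (rule ennreal_leI)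
      have "B/6 * (1/real N^6 - 1/real (M+N)^6) \<le> B/6 * (1/real N^6)"
        using B0 by (intro mult_left_mono) auto
      thus "(\<Sum>k<M. B / real (k+N+1)^7) \<le> B / (6 * real N ^ 6)" using ps[of M] by simp
    qed
    finally show "(\<Sum>k<M. ennreal (B / real (k+N+1)^7)) \<le> ennreal (B / (6 * real N ^ 6))" .
  qed
  also have "\<dots> \<le> ennreal (5 * (2*d2)^7 / (48 * (2*pi)^7 * real N ^ 6))"
  proof (rule ennreal_leI)
    define X where "X = (2*d2)^7 / ((2*pi)^7 * real N ^ 6)"
    have X0: "X \<ge> 0" using d by (simp add: X_def)
    have e1: "B / (6 * real N ^ 6) = 4/54 * X" by (simp add: B_def X_def field_simps)
    have e2: "5 * (2*d2)^7 / (48 * (2*pi)^7 * real N ^ 6) = 5/48 * X" by (simp add: X_def field_simps)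
    show "B / (6 * real N ^ 6) \<le> 5 * (2*d2)^7 / (48 * (2*pi)^7 * real N ^ 6)"
      unfolding e1 e2 using X0 by simp
  qed
  finally show ?thesis .
qed

lemma part1:
  fixes c d2 :: real and n2 :: nat
  assumes c: "0 < c" and d: "0 < d2"
  shows "let m = (if real n2 \<le> d2 * c / (pi * sqrt 2)
                     then c^2 * (2*pi*ntilde d2 n2)^2 + 1 - c^4 / 4
                     else (2*pi*ntilde d2 n2)^4 + 1)
            in (\<exists>\<xi>. lfun c d2 n2 \<xi> = m) \<and> (\<forall>\<xi>. m \<le> lfun c d2 n2 \<xi>)"
proof -
  define v where "v = 2*pi*ntilde d2 n2"
  define V where "V = v^2"
  have vv: "v = pi * real n2 / d2" using d by (simp add: v_def ntilde_def)
  have v0: "v \<ge> 0" using d by (simp add: vv)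
  have s2: "sqrt 2 > 0" by simp
  have "real n2 \<le> d2 * c / (pi * sqrt 2) \<longleftrightarrow> v \<le> c / sqrt 2"
    unfolding vv using d s2 by (simp add: field_simps)
  also have "\<dots> \<longleftrightarrow> v^2 \<le> (c / sqrt 2)^2"
    using v0 c by (metis abs_le_square_iff abs_of_nonneg divide_nonneg_nonneg less_imp_le real_sqrt_ge_zero zero_le_numeral)
  also have "(c / sqrt 2)^2 = c^2/2" by (simp add: power_divide)
  finally have cond: "real n2 \<le> d2 * c / (pi * sqrt 2) \<longleftrightarrow> V \<le> c^2/2" by (simp add: V_def)
  have lf: "lfun c d2 n2 \<xi> = ((2*pi*\<xi>)^2 + V)^2 - c^2 * (2*pi*\<xi>)^2 + 1" for \<xi>
    by (simp add: lfun_eq V_def v_def)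
  show ?thesis
  proof (cases "V \<le> c^2/2")
    case True
    define \<xi> where "\<xi> = sqrt (c^2/2 - V) / (2*pi)"
    have hs: "(2*pi*\<xi>)^2 = c^2/2 - V" using True by (simp add: \<xi>_def)
    have "lfun c d2 n2 \<xi> = c^2 * V + 1 - c^4/4"
      by (simp only: lf hs) (simp add: power2_eq_square power4_eq_xxxx algebra_simps)
    moreover have "c^2 * V + 1 - c^4/4 \<le> lfun c d2 n2 x" for x
      using alg1[OF _ True] by (simp add: lf)
    ultimately show ?thesis using True cond by (auto simp: Let_def V_def v_def)
  next
    case False
    have "lfun c d2 n2 0 = V^2 + 1" by (simp add: lf)
    moreover have "V^2 + 1 \<le> lfun c d2 n2 x" for x
      using alg2[where s="(2*pi*x)^2" and V=V and c=c] False by (simp add: lf)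
    ultimately show ?thesis using False cond
      by (auto simp: Let_def V_def v_def simp flip: power_mult)
  qed
qed

lemma part2:
  fixes c d2 :: real and n2 :: nat
  assumes c: "0 < c" and d: "0 < d2" and n: "real n2 \<ge> d2 * c / pi"
  shows "lfun c d2 n2 \<xi> \<ge> (2*pi)^4 / 2 * ((ntilde d2 n2)^2 + \<xi>^2)^2"
proof -
  define v where "v = 2*pi*ntilde d2 n2"
  have vv: "v = pi * real n2 / d2" using d by (simp add: v_def ntilde_def)
  have cv: "c \<le> v" unfolding vv using n d by (simp add: field_simps)
  have V: "v^2 \<ge> c^2" using cv c by (intro power_mono) auto
  have "((2*pi*\<xi>)^2 + v^2)^2 / 2 \<le> ((2*pi*\<xi>)^2 + v^2)^2 - c^2 * (2*pi*\<xi>)^2 + 1"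
    by (rule alg3) (use V in auto)
  moreover have "((2*pi*\<xi>)^2 + v^2)^2 / 2 = (2*pi)^4 / 2 * ((ntilde d2 n2)^2 + \<xi>^2)^2"
    by (simp add: v_def power_mult_distrib power2_eq_square power4_eq_xxxx algebra_simps)
  ultimately show ?thesis by (simp add: lfun_eq v_def)
qed

theorem lemma7p1:
  fixes c d2 :: real
  assumes "0 < c" and "c < sqrt 2" and "0 < d2"
  shows "(\<forall>n2::nat.
           (let m = (if real n2 \<le> d2 * c / (pi * sqrt 2)
                     then c^2 * (2*pi*ntilde d2 n2)^2 + 1 - c^4 / 4
                     else (2*pi*ntilde d2 n2)^4 + 1)
            in (\<exists>\<xi>. lfun c d2 n2 \<xi> = m) \<and> (\<forall>\<xi>. m \<le> lfun c d2 n2 \<xi>))) \<and>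
         (\<forall>n2::nat. real n2 \<ge> d2 * c / pi \<longrightarrow>
           (\<forall>\<xi>::real. lfun c d2 n2 \<xi> \<ge> (2*pi)^4 / 2 * ((ntilde d2 n2)^2 + \<xi>^2)^2)) \<and>
         (\<forall>N::nat. real N > d2 * c / pi \<longrightarrow>
           (\<Sum>k. \<integral>\<^sup>+ \<xi>. ennreal ((1 / lfun c d2 (k + N + 1) \<xi>)^2) \<partial>lborel)
             \<le> ennreal (5 * (2*d2)^7 / (48 * (2*pi)^7 * real N ^ 6)))"
  using part1[OF assms(1,3)] part2[OF assms(1,3)] part3[OF assms(1,3)] by blast

end
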